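(* Let $M\in\mathbb S^n$ with largest eigenvalue $\lambda_1>0$ and smallest eigenvalue $\lambda_n\le0$, $\beta\in\mathbb R^n$, $\gamma\in\mathbb R$, $\phi(x)=x^TMx-2\beta^Tx+\gamma$, $\mathcal Q=\{x:\phi(x)\le0\}$. Let $x_0\in\mathcal Q$, $r>0$, and let $u_n$ be a unit eigenvector of $M$ for $\lambda_n$. Denote by $B(y,r)$ the closed Euclidean ball of radius $r$ around $y$. (i) If $\lambda_n=0$ and $\beta^Tu_n>0$, then for all $\theta\ge\Theta_0:=\dfrac{r^2\lambda_1+2r\|Mx_0-\beta\|_2}{2\beta^Tu_n}$ we have $B(x_0+\theta u_n,r)\subseteq\mathcal Q$. (ii) If $\lambda_n<0$ (and $u_n$ is normalized so that $\beta^Tu_n\ge0$), let $b_0:=\lambda_nx_0^Tu_n-\beta^Tu_n+r|\lambda_n|$ and $$\Theta_-:=\frac{-b_0-\sqrt{b_0^2-\lambda_n(r^2\lambda_1+2r\|Mx_0-\beta\|_2)}}{\lambda_n}.$$ Then for all $\theta\ge\Theta_-$ we have $B(x_0+\theta u_n,r)\subseteq\mathcal Q$.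
   Context: $\mathbb S^n$ denotes the real symmetric $n\times n$ matrices. *)

theory Defs
  imports "HOL-Analysis.Analysis"
begin

definition symmetric_matrix :: "real^'n^'n \<Rightarrow> bool" where
  "symmetric_matrix M \<longleftrightarrow> transpose M = M"

definition is_eigenvalue :: "real^'n^'n \<Rightarrow> real \<Rightarrow> bool" where
  "is_eigenvalue M l \<longleftrightarrow> (\<exists>v. v \<noteq> 0 \<and> M *v v = l *\<^sub>R v)"

definition is_largest_eigenvalue :: "real^'n^'n \<Rightarrow> real \<Rightarrow> bool" where
  "is_largest_eigenvalue M l \<longleftrightarrow> is_eigenvalue M l \<and> (\<forall>m. is_eigenvalue M m \<longrightarrow> m \<le> l)"

definition is_smallest_eigenvalue :: "real^'n^'n \<Rightarrow> real \<Rightarrow> bool" where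
  "is_smallest_eigenvalue M l \<longleftrightarrow> is_eigenvalue M l \<and> (\<forall>m. is_eigenvalue M m \<longrightarrow> l \<le> m)"

definition qphi :: "real^'n^'n \<Rightarrow> real^'n \<Rightarrow> real \<Rightarrow> real^'n \<Rightarrow> real" where
  "qphi M beta gamma x = x \<bullet> (M *v x) - 2 * (beta \<bullet> x) + gamma"

definition qset :: "real^'n^'n \<Rightarrow> real^'n \<Rightarrow> real \<Rightarrow> (real^'n) set" where
  "qset M beta gamma = {x. qphi M beta gamma x \<le> 0}"

end

theory Submission
  imports Defs
begin

lemma sym_inner:
  assumes "symmetric_matrix M"
  shows "x \<bullet> (M *v y) = y \<bullet> (M *v x)"
proof -
  have "x \<bullet> (M *v y) = (x v* M) \<bullet> y" by (simp add: dot_lmul_matrix)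
  also have "x v* M = transpose M *v x" by simp
  also have "transpose M = M" using assms unfolding symmetric_matrix_def by simp
  finally show ?thesis by (simp add: inner_commute)
qed

lemma rayleigh:
  fixes M :: "real^'n^'n"
  assumes sym: "symmetric_matrix M" and lg: "is_largest_eigenvalue M l"
  shows "z \<bullet> (M *v z) \<le> l * (norm z)^2"
proof -
  let ?q = "\<lambda>z::real^'n. z \<bullet> (M *v z)"
  have cont: "continuous_on (sphere 0 1) ?q"
    by (intro continuous_intros continuous_on_compose2[OF matrix_vector_mult_linear_continuous_on[of UNIV M]]) auto
  have ne: "sphere (0::real^'n) 1 \<noteq> {}" by simp
  obtain v where v: "v \<in> sphere 0 1" and vmax: "\<And>y. y \<in> sphere 0 1 \<Longrightarrow> ?q y \<le> ?q v"
    using continuous_attains_sup[OF compact_sphere ne cont] by blast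
  define \<mu> where "\<mu> = ?q v"
  have nv: "norm v = 1" using v by simp
  have vv: "v \<bullet> v = 1" using nv by (simp add: norm_eq_sqrt_inner)
  have bound: "?q y \<le> \<mu> * (norm y)^2" for y
  proof (cases "y = 0")
    case True then show ?thesis by simp
  next
    case False
    define y' where "y' = (1 / norm y) *\<^sub>R y"
    have "y' \<in> sphere 0 1" using False by (simp add: y'_def)
    hence "?q y' \<le> \<mu>" using vmax \<mu>_def by blast
    moreover have "?q y' = ?q y / (norm y)^2"
      by (simp add: y'_def matrix_vector_mult_scaleR power2_eq_square)
    ultimately show ?thesis using False by (simp add: field_simps)
  qed
  define p where "p y = \<mu> * (norm y)^2 - ?q y" for y
  have pnn: "p y \<ge> 0" for y using bound[of y] by (simp add: p_def)
  have pv: "p v = 0" using nv by (simp add: p_def \<mu>_def)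
  have expand: "p (v + t *\<^sub>R w) = 2 * t * (\<mu> * (v \<bullet> w) - w \<bullet> (M *v v)) + t^2 * p w" for t w
  proof -
    have n2: "(norm (v + t *\<^sub>R w))^2 = 1 + 2 * t * (v \<bullet> w) + t^2 * (w \<bullet> w)"
      unfolding power2_norm_eq_inner
      by (simp add: inner_add_left inner_add_right vv inner_commute power2_eq_square algebra_simps)
    have q2: "?q (v + t *\<^sub>R w) = ?q v + 2 * t * (w \<bullet> (M *v v)) + t^2 * ?q w"
      using sym_inner[OF sym, of v w]
      by (simp add: matrix_vector_right_distrib matrix_vector_mult_scaleR inner_add_left
          inner_add_right power2_eq_square algebra_simps)
    show ?thesis unfolding p_def n2 q2
      by (simp add: \<mu>_def power2_norm_eq_inner[symmetric] power2_eq_square algebra_simps)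
  qed
  have c0: "\<mu> * (v \<bullet> w) - w \<bullet> (M *v v) = 0" for w
  proof -
    define c where "c = \<mu> * (v \<bullet> w) - w \<bullet> (M *v v)"
    define K where "K = p w + 1"
    have K: "K > 0" using pnn[of w] by (simp add: K_def)
    define t where "t = - c / K"
    have "0 \<le> p (v + t *\<^sub>R w)" by (rule pnn)
    also have "\<dots> = 2 * t * c + t^2 * p w" using expand c_def by simp
    also have "\<dots> = c^2 * (p w - 2 * K) / K^2" using K
      by (simp add: t_def field_simps power2_eq_square)
    finally have "0 \<le> c^2 * (p w - 2 * K) / K^2" .
    moreover have "p w - 2 * K < 0" using pnn[of w] K_def by simp
    ultimately have "c^2 \<le> 0" using K
      by (smt (verit, ccfv_SIG) divide_nonneg_pos mult_nonneg_nonpos2 zero_less_power zero_le_power2 mult_pos_neg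
          divide_neg_pos mult_le_0_iff)
    thus ?thesis unfolding c_def by simp
  qed
  have "M *v v = \<mu> *\<^sub>R v"
  proof -
    define w where "w = \<mu> *\<^sub>R v - M *v v"
    have "\<mu> * (v \<bullet> w) - w \<bullet> (M *v v) = w \<bullet> w"
      by (simp add: w_def inner_diff_left inner_diff_right inner_commute algebra_simps)
    hence "w \<bullet> w = 0" using c0[of w] by simp
    thus ?thesis by (simp add: w_def)
  qed
  moreover have "v \<noteq> 0" using nv by auto
  ultimately have "is_eigenvalue M \<mu>" unfolding is_eigenvalue_def by blast
  hence "\<mu> \<le> l" using lg unfolding is_largest_eigenvalue_def by blast
  hence "\<mu> * (norm z)^2 \<le> l * (norm z)^2" by (simp add: mult_right_mono)
  thus ?thesis using bound[of z] by linarith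
qed

lemma main_bound:
  fixes M :: "real^'n^'n" and beta x0 u y :: "real^'n" and gamma r lam1 lamn theta :: real
  assumes sym: "symmetric_matrix M"
    and lg: "is_largest_eigenvalue M lam1" and "lam1 > 0"
    and "lamn \<le> 0"
    and x0: "x0 \<in> qset M beta gamma" and "r > 0"
    and Mu: "M *v u = lamn *\<^sub>R u" and nu: "norm u = 1"
    and th: "theta \<ge> 0" and y: "y \<in> cball (x0 + theta *\<^sub>R u) r"
  shows "qphi M beta gamma y \<le> lamn * theta^2
     + 2 * theta * (lamn * (x0 \<bullet> u) - beta \<bullet> u + r * \<bar>lamn\<bar>)
     + (r^2 * lam1 + 2 * r * norm (M *v x0 - beta))"
proof -
  define z where "z = y - x0 - theta *\<^sub>R u"
  have nz: "norm z \<le> r" using y by (simp add: z_def dist_norm norm_minus_commute algebra_simps)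
  have yz: "y = x0 + (theta *\<^sub>R u + z)" by (simp add: z_def)
  have uu: "u \<bullet> u = 1" using nu by (simp add: norm_eq_sqrt_inner)
  define g where "g = M *v x0 - beta"
  have e1: "qphi M beta gamma y = qphi M beta gamma x0 + 2 * ((theta *\<^sub>R u + z) \<bullet> g)
      + (theta *\<^sub>R u + z) \<bullet> (M *v (theta *\<^sub>R u + z))"
    unfolding yz qphi_def g_def using sym_inner[OF sym, of x0 "theta *\<^sub>R u + z"]
    by (simp add: matrix_vector_right_distrib inner_add_left inner_add_right inner_diff_right
        algebra_simps inner_commute[of beta])
  have zMu: "z \<bullet> (M *v u) = lamn * (z \<bullet> u)" using Mu by simp
  have uMz: "u \<bullet> (M *v z) = lamn * (z \<bullet> u)" using sym_inner[OF sym, of u z] zMu by simp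
  have e2: "(theta *\<^sub>R u + z) \<bullet> (M *v (theta *\<^sub>R u + z)) =
      theta^2 * lamn + 2 * theta * lamn * (z \<bullet> u) + z \<bullet> (M *v z)"
    using zMu uMz Mu uu
    by (simp add: matrix_vector_right_distrib matrix_vector_mult_scaleR inner_add_left
        inner_add_right power2_eq_square algebra_simps)
  have ug: "u \<bullet> g = lamn * (x0 \<bullet> u) - beta \<bullet> u"
    unfolding g_def using sym_inner[OF sym, of u x0] Mu
    by (simp add: inner_diff_right inner_commute)
  have e3: "(theta *\<^sub>R u + z) \<bullet> g = theta * (lamn * (x0 \<bullet> u) - beta \<bullet> u) + z \<bullet> g"
    using ug by (simp add: inner_add_left)
  have b1: "z \<bullet> g \<le> r * norm g"
    using norm_cauchy_schwarz[of z g] nz mult_right_mono[OF nz norm_ge_zero[of g]] by linarith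
  have b2: "z \<bullet> (M *v z) \<le> r^2 * lam1"
  proof -
    have "z \<bullet> (M *v z) \<le> lam1 * (norm z)^2" by (rule rayleigh[OF sym lg])
    also have "\<dots> \<le> lam1 * r^2" using nz \<open>lam1 > 0\<close>
      by (intro mult_left_mono power_mono) auto
    finally show ?thesis by (simp add: mult.commute)
  qed
  have b3: "lamn * (z \<bullet> u) \<le> r * \<bar>lamn\<bar>"
  proof -
    have "\<bar>z \<bullet> u\<bar> \<le> r" using Cauchy_Schwarz_ineq2[of z u] nu nz by simp
    hence "\<bar>lamn * (z \<bullet> u)\<bar> \<le> \<bar>lamn\<bar> * r" by (simp add: abs_mult mult_left_mono)
    thus ?thesis by (simp add: mult.commute)
  qed
  have b3': "theta * (lamn * (z \<bullet> u)) \<le> theta * (r * \<bar>lamn\<bar>)"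
    using mult_left_mono[OF b3 th] .
  have q0: "qphi M beta gamma x0 \<le> 0" using x0 by (simp add: qset_def)
  show ?thesis unfolding e1 e2 e3 g_def[symmetric]
    using b1 b2 b3' q0 by (simp add: algebra_simps power2_eq_square)
qed

theorem proposition5p3:
  fixes M :: "real^'n^'n" and beta x0 u :: "real^'n" and gamma r lam1 lamn :: real
  assumes "symmetric_matrix M"
    and "is_largest_eigenvalue M lam1" and "lam1 > 0"
    and "is_smallest_eigenvalue M lamn" and "lamn \<le> 0"
    and "x0 \<in> qset M beta gamma" and "r > 0"
    and "M *v u = lamn *\<^sub>R u" and "norm u = 1"
  shows "(lamn = 0 \<and> beta \<bullet> u > 0 \<longrightarrow>
            (\<forall>theta. theta \<ge> (r^2 * lam1 + 2 * r * norm (M *v x0 - beta)) / (2 * (beta \<bullet> u)) \<longrightarrow>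
               cball (x0 + theta *\<^sub>R u) r \<subseteq> qset M beta gamma))
       \<and> (lamn < 0 \<and> beta \<bullet> u \<ge> 0 \<longrightarrow>
            (let b0 = lamn * (x0 \<bullet> u) - beta \<bullet> u + r * \<bar>lamn\<bar>
             in \<forall>theta. theta \<ge> (- b0 - sqrt (b0^2 - lamn * (r^2 * lam1 + 2 * r * norm (M *v x0 - beta)))) / lamn \<longrightarrow>
               cball (x0 + theta *\<^sub>R u) r \<subseteq> qset M beta gamma))"
proof -
  define C where "C = r^2 * lam1 + 2 * r * norm (M *v x0 - beta)"
  have C0: "C \<ge> 0" using assms(3,7) by (simp add: C_def)
  note mb = main_bound[OF assms(1,2,3,5,6,7,8,9)]
  have part1: "lamn = 0 \<and> beta \<bullet> u > 0 \<longrightarrow>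
      (\<forall>theta. theta \<ge> C / (2 * (beta \<bullet> u)) \<longrightarrow> cball (x0 + theta *\<^sub>R u) r \<subseteq> qset M beta gamma)"
  proof (intro impI allI subsetI)
    fix theta y
    assume h: "lamn = 0 \<and> beta \<bullet> u > 0" and t: "theta \<ge> C / (2 * (beta \<bullet> u))"
      and y: "y \<in> cball (x0 + theta *\<^sub>R u) r"
    have th0: "theta \<ge> 0" using t C0 h by (smt (verit) divide_nonneg_pos)
    have "C \<le> theta * (2 * (beta \<bullet> u))" using t h by (simp add: pos_divide_le_eq)
    moreover have "qphi M beta gamma y \<le> 2 * theta * (- (beta \<bullet> u)) + C"
      using mb[OF th0 y] h by (simp add: C_def)
    ultimately show "y \<in> qset M beta gamma" by (simp add: qset_def algebra_simps)
  qed
  have part2: "lamn < 0 \<and> beta \<bullet> u \<ge> 0 \<longrightarrow>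
            (let b0 = lamn * (x0 \<bullet> u) - beta \<bullet> u + r * \<bar>lamn\<bar>
             in \<forall>theta. theta \<ge> (- b0 - sqrt (b0^2 - lamn * C)) / lamn \<longrightarrow>
               cball (x0 + theta *\<^sub>R u) r \<subseteq> qset M beta gamma)"
    unfolding Let_def
  proof (intro impI allI subsetI)
    fix theta y
    define b0 where "b0 = lamn * (x0 \<bullet> u) - beta \<bullet> u + r * \<bar>lamn\<bar>"
    define s where "s = sqrt (b0^2 - lamn * C)"
    assume h: "lamn < 0 \<and> beta \<bullet> u \<ge> 0"
      and t: "theta \<ge> (- (lamn * (x0 \<bullet> u) - beta \<bullet> u + r * \<bar>lamn\<bar>) - sqrt ((lamn * (x0 \<bullet> u) - beta \<bullet> u + r * \<bar>lamn\<bar>)^2 - lamn * C)) / lamn"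
      and y: "y \<in> cball (x0 + theta *\<^sub>R u) r"
    have ln: "lamn < 0" using h by simp
    have t': "theta \<ge> (- b0 - s) / lamn" using t by (simp add: b0_def s_def)
    have rad: "b0^2 - lamn * C \<ge> b0^2" using ln C0 by (simp add: mult_nonpos_nonneg)
    hence s2: "s^2 = b0^2 - lamn * C" unfolding s_def
      by (intro real_sqrt_pow2) (smt (verit) zero_le_power2)
    have sge: "s \<ge> \<bar>b0\<bar>" unfolding s_def using rad
      by (metis real_sqrt_abs real_sqrt_le_mono)
    define t1 where "t1 = (- b0 - s) / lamn"
    define t2 where "t2 = (- b0 + s) / lamn"
    have t1pos: "t1 \<ge> 0" unfolding t1_def using sge ln
      by (intro divide_nonpos_neg) auto
    have t21: "t2 \<le> t1" unfolding t1_def t2_def using ln sge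
      by (intro divide_right_mono_neg) auto
    have th0: "theta \<ge> 0" using t' t1pos t1_def by linarith
    have fac: "lamn * theta^2 + 2 * theta * b0 + C = lamn * (theta - t1) * (theta - t2)"
    proof -
      have "lamn * (theta - t1) * (theta - t2) = lamn * theta^2 + 2 * theta * b0 + (b0^2 - s^2) / lamn"
        unfolding t1_def t2_def using ln by (simp add: field_simps power2_eq_square)
      also have "(b0^2 - s^2) / lamn = C" using s2 ln by simp
      finally show ?thesis by simp
    qed
    have "lamn * (theta - t1) * (theta - t2) \<le> 0"
      using ln t' t21 t1_def
      by (intro mult_nonpos_nonneg) (auto intro: mult_nonpos_nonneg)
    moreover have "qphi M beta gamma y \<le> lamn * theta^2 + 2 * theta * b0 + C"
      using mb[OF th0 y] by (simp add: C_def b0_def)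
    ultimately show "y \<in> qset M beta gamma" using fac by (simp add: qset_def)
  qed
  show ?thesis using part1 part2 unfolding C_def by blast
qed

end
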